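(* There exists $N$ such that for all positive integers $a,b\ge N$ we have $r(a,b)\le \frac{9}{8}$. More precisely, for all such $a,b$, the quotient $$\frac{\phi(c!)}{\phi(a!)\,\phi(b!)},\qquad c=a+b+\left\lfloor\frac{a+b}{8}\right\rfloor,$$ is an integer.
   Context: $\phi$ denotes Euler's totient function. For positive integers $a,b$, $c(a,b)$ is the least positive integer $c$ such that $\phi(a!)\,\phi(b!)$ divides $\phi(c!)$, and $r(a,b)=c(a,b)/(a+b)$. *)

theory Defs
  imports "HOL-Number_Theory.Number_Theory"
begin

definition c_ab :: "nat \<Rightarrow> nat \<Rightarrow> nat" where
  "c_ab a b = (LEAST c. 0 < c \<and> totient (fact a) * totient (fact b) dvd totient (fact c))"

definition r_ab :: "nat \<Rightarrow> nat \<Rightarrow> real" where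
  "r_ab a b = real (c_ab a b) / real (a + b)"

end

theory Submission
  imports Defs
begin


definition P :: "nat \<Rightarrow> nat set" where "P n = {p. prime p \<and> p \<le> n}"
lemma finite_P[simp]: "finite (P n)"
  unfolding P_def by (rule finite_subset[of _ "{..n}"]) auto

definition V :: "nat \<Rightarrow> nat \<Rightarrow> nat" where "V q n = multiplicity q (fact n :: nat)"
definition S :: "nat \<Rightarrow> nat \<Rightarrow> nat" where "S q n = (\<Sum>p\<in>P n. multiplicity q (p - 1))"

lemma prime_factors_fact': "prime_factors (fact n :: nat) = P n"
proof -
  have "prime_factors (fact n::nat) = {p. prime p \<and> p dvd fact n}"
    by (rule prime_factors_dvd) simp
  also have "\<dots> = P n" unfolding P_def using prime_dvd_fact_iff by blast
  finally show ?thesis .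
qed

lemma mult_totient_fact:
  assumes q: "prime q"
  shows "multiplicity q (totient (fact n)) = (V q n - 1) + S q n"
proof -
  have pos: "(fact n::nat) > 0" by simp
  have "totient (fact n) = (\<Prod>p\<in>P n. p ^ (multiplicity p (fact n :: nat) - 1) * (p - 1))"
    using totient_formula1[OF pos] prime_factors_fact' by simp
  then have "multiplicity q (totient (fact n)) =
     (\<Sum>p\<in>P n. multiplicity q (p ^ (multiplicity p (fact n::nat) - 1) * (p - 1)))"
  proof -
    have nz: "0 \<notin> (\<lambda>p. p ^ (multiplicity p (fact n::nat) - 1) * (p - 1)) ` P n"
    proof
      assume "0 \<in> (\<lambda>p. p ^ (multiplicity p (fact n::nat) - 1) * (p - 1)) ` P n"
      then obtain p where "p \<in> P n" "p ^ (multiplicity p (fact n::nat) - 1) * (p - 1) = 0" by auto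
      moreover from this(1) have "p > 1" using prime_gt_1_nat by (simp add: P_def)
      ultimately show False by simp
    qed
    show ?thesis using \<open>totient (fact n) = _\<close> prime_elem_multiplicity_prod_distrib[OF prime_imp_prime_elem[OF q] nz finite_P]
      by simp
  qed
  also have "\<dots> = (\<Sum>p\<in>P n. (if p = q then multiplicity p (fact n::nat) - 1 else 0) + multiplicity q (p - 1))"
  proof (rule sum.cong[OF refl])
    fix p assume "p \<in> P n"
    then have p: "prime p" by (simp add: P_def)
    then have "p - 1 \<noteq> 0" using prime_gt_1_nat by fastforce
    moreover have "p ^ (multiplicity p (fact n::nat) - 1) \<noteq> 0" using p by (simp add: prime_gt_0_nat)
    ultimately have "multiplicity q (p ^ (multiplicity p (fact n::nat) - 1) * (p - 1)) =
      multiplicity q (p ^ (multiplicity p (fact n::nat) - 1)) + multiplicity q (p - 1)"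
      using q by (simp add: prime_elem_multiplicity_mult_distrib)
    also have "multiplicity q (p ^ (multiplicity p (fact n::nat) - 1)) = (if p = q then multiplicity p (fact n::nat) - 1 else 0)"
      using p q by (auto simp: multiplicity_distinct_prime_power)
    finally show "multiplicity q (p ^ (multiplicity p (fact n::nat) - 1) * (p - 1)) =
        (if p = q then multiplicity p (fact n::nat) - 1 else 0) + multiplicity q (p - 1)" .
  qed
  also have "\<dots> = (if q \<in> P n then V q n - 1 else 0) + S q n"
    by (simp add: sum.distrib S_def V_def sum.delta')
  also have "(if q \<in> P n then V q n - 1 else 0) + S q n = V q n - 1 + S q n"
  proof (cases "q \<in> P n")
    case False
    then have "q > n" using q by (auto simp: P_def)
    then have "\<not> q dvd (fact n::nat)" using q by (simp add: prime_dvd_fact_iff)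
    then show ?thesis using False by (simp add: V_def not_dvd_imp_multiplicity_0)
  qed simp
  finally show ?thesis .
qed

lemma card_multiples: assumes "d > 0" shows "card {i\<in>{1..m}. d dvd (i::nat)} = m div d"
proof -
  have "{i\<in>{1..m}. d dvd i} = (\<lambda>k. d * k) ` {1..m div d}"
  proof (rule Set.set_eqI)
    fix i show "i \<in> {i\<in>{1..m}. d dvd i} \<longleftrightarrow> i \<in> (\<lambda>k. d * k) ` {1..m div d}"
    proof
      assume "i \<in> {i\<in>{1..m}. d dvd i}"
      then obtain k where k: "i = d * k" "1 \<le> i" "i \<le> m" by auto
      then have "k \<ge> 1" by (cases k) auto
      moreover have "k \<le> m div d" using k assms
        by (metis div_le_mono nonzero_mult_div_cancel_left not_gr0)
      ultimately show "i \<in> (\<lambda>k. d * k) ` {1..m div d}" using k by auto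
    next
      assume "i \<in> (\<lambda>k. d * k) ` {1..m div d}"
      then obtain k where k: "k \<in> {1..m div d}" "i = d * k" by (auto simp: image_iff)
      have "d * k \<le> d * (m div d)" using k(1) by simp
      also have "\<dots> \<le> m" by simp
      finally show "i \<in> {i\<in>{1..m}. d dvd i}" using k assms by auto
    qed
  qed
  also have "card \<dots> = m div d" using assms by (subst card_image) (auto simp: inj_on_def)
  finally show ?thesis .
qed



lemma card_filter_sum: "finite J \<Longrightarrow> card {j\<in>J. R j} = (\<Sum>j\<in>J. if R j then 1 else (0::nat))"
  by (simp add: sum.If_cases Int_def)

lemma swap_card:
  assumes "finite I" "finite J"
  shows "(\<Sum>i\<in>I. card {j\<in>J. R i j}) = (\<Sum>j\<in>J. card {i\<in>I. R i j})"
  using assms by (simp add: card_filter_sum sum.swap[of _ I J])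

lemma pdvd_iff:
  assumes "prime (q::nat)" "x > 0"
  shows "q ^ n dvd x \<longleftrightarrow> n \<le> multiplicity q x"
  using assms by (intro power_dvd_iff_le_multiplicity) (auto simp: prime_gt_1_nat)

lemma mult_lt_self:
  assumes q: "prime (q::nat)" and x: "x > 0"
  shows "multiplicity q x < x"
proof -
  let ?M = "multiplicity q x"
  have "q ^ ?M dvd x" by (rule multiplicity_dvd)
  then have "q ^ ?M \<le> x" using x by (rule dvd_imp_le)
  moreover have "?M < 2 ^ ?M" by (rule less_exp)
  moreover have "(2::nat) ^ ?M \<le> q ^ ?M" using prime_ge_2_nat[OF q] by (rule power_mono) simp
  ultimately show ?thesis by linarith
qed

lemma mult_as_card:
  assumes q: "prime (q::nat)" and x: "x > 0" and K: "multiplicity q x \<le> K"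
  shows "multiplicity q x = card {j\<in>{1..K}. q ^ j dvd x}"
proof -
  have "{j\<in>{1..K}. q ^ j dvd x} = {1..multiplicity q x}"
  proof (rule Set.set_eqI)
    fix j
    have "q ^ j dvd x \<longleftrightarrow> j \<le> multiplicity q x" by (rule pdvd_iff[OF q x])
    then show "j \<in> {j\<in>{1..K}. q ^ j dvd x} \<longleftrightarrow> j \<in> {1..multiplicity q x}"
      using K by auto
  qed
  then show ?thesis by simp
qed

lemma card_le_mult:
  assumes q: "prime (q::nat)" and x: "x > 0"
  shows "card {j\<in>{1..K}. q ^ j dvd x} \<le> multiplicity q x"
proof -
  have "{j\<in>{1..K}. q ^ j dvd x} \<subseteq> {1..multiplicity q x}"
  proof
    fix j assume j: "j \<in> {j\<in>{1..K}. q ^ j dvd x}"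
    have "q ^ j dvd x \<longleftrightarrow> j \<le> multiplicity q x" by (rule pdvd_iff[OF q x])
    then show "j \<in> {1..multiplicity q x}" using j by auto
  qed
  then have "card {j\<in>{1..K}. q ^ j dvd x} \<le> card {1..multiplicity q x}"
    by (intro card_mono) auto
  then show ?thesis by simp
qed

lemma leg_lb:
  assumes q: "prime q"
  shows "(\<Sum>j\<in>{1..K}. m div q ^ j) \<le> V q m"
proof -
  have f: "(fact m :: nat) = \<Prod>{1..m}" by (simp add: fact_prod)
  have "V q m = (\<Sum>i\<in>{1..m}. multiplicity q i)"
    unfolding V_def f
    by (rule prime_elem_multiplicity_prod_distrib) (use q in auto)
  also have "\<dots> \<ge> (\<Sum>i\<in>{1..m}. card {j\<in>{1..K}. q ^ j dvd i})"
    by (rule sum_mono) (use q card_le_mult in auto)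
  also have "(\<Sum>i\<in>{1..m}. card {j\<in>{1..K}. q ^ j dvd i}) = (\<Sum>j\<in>{1..K}. card {i\<in>{1..m}. q ^ j dvd i})"
    by (rule swap_card) auto
  also have "\<dots> = (\<Sum>j\<in>{1..K}. m div q ^ j)"
    by (rule sum.cong[OF refl], rule card_multiples) (use q prime_gt_0_nat in auto)
  finally show ?thesis .
qed

definition A :: "nat \<Rightarrow> nat \<Rightarrow> nat \<Rightarrow> nat" where
  "A q a j = card {p\<in>P a. q ^ j dvd p - 1}"

lemma S_levels:
  assumes q: "prime q"
  shows "S q a = (\<Sum>j\<in>{1..a}. A q a j)"
proof -
  have "S q a = (\<Sum>p\<in>P a. card {j\<in>{1..a}. q ^ j dvd p - 1})"
    unfolding S_def
  proof (rule sum.cong[OF refl], rule mult_as_card[OF q])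
    fix p assume p: "p \<in> P a"
    then have "p > 1" "p \<le> a" using prime_gt_1_nat by (auto simp: P_def)
    then show "p - 1 > 0" by simp
    have "multiplicity q (p - 1) < p - 1" using mult_lt_self[OF q, of "p - 1"] \<open>p > 1\<close> by simp
    then show "multiplicity q (p - 1) \<le> a" using \<open>p \<le> a\<close> by simp
  qed
  also have "\<dots> = (\<Sum>j\<in>{1..a}. A q a j)"
    unfolding A_def by (rule swap_card) auto
  finally show ?thesis .
qed

lemma S_mono: "b \<le> c \<Longrightarrow> S q b \<le> S q c"
  unfolding S_def by (rule sum_mono2) (auto simp: P_def)

lemma S_zero: assumes q: "prime q" and "a < q" shows "S q a = 0"
  unfolding S_def
proof (rule sum.neutral, rule ballI)
  fix p assume "p \<in> P a"
  then have "p > 1" "p \<le> a" using prime_gt_1_nat by (auto simp: P_def)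
  then have "\<not> q dvd p - 1" using assms by (auto dest: dvd_imp_le)
  then show "multiplicity q (p - 1) = 0" by (rule not_dvd_imp_multiplicity_0)
qed

lemma V_zero: assumes q: "prime q" and "a < q" shows "V q a = 0"
  unfolding V_def using assms by (intro not_dvd_imp_multiplicity_0) (simp add: prime_dvd_fact_iff)

lemma V_pos: assumes q: "prime q" and "q \<le> a" shows "V q a \<ge> 1"
proof -
  have "q dvd (fact a :: nat)" using assms by (simp add: prime_dvd_fact_iff)
  then have "q ^ 1 dvd (fact a :: nat)" by simp
  then show ?thesis unfolding V_def using pdvd_iff[OF q, of "fact a" 1] by simp
qed

lemma fact3_dvd:
  assumes "a + b + m \<le> c"
  shows "(fact a * fact b * fact m :: nat) dvd fact c"
proof -
  have e2: "(fact (a + b + m) :: nat) = fact (a+b) * fact m * ((a+b+m) choose (a+b))"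
    using binomial_fact_lemma[of "a+b" "a+b+m"] by simp
  have e1: "(fact (a + b) :: nat) = fact a * fact b * ((a+b) choose a)"
    using binomial_fact_lemma[of a "a+b"] by simp
  have "(fact a * fact b :: nat) dvd fact (a + b)" using e1 by (rule dvdI)
  then have "(fact a * fact b * fact m :: nat) dvd fact (a + b) * fact m" by simp
  also have "(fact (a+b) * fact m :: nat) dvd fact (a + b + m)" using e2 by (rule dvdI)
  also have "(fact (a+b+m) :: nat) dvd fact c" using assms by (rule fact_dvd)
  finally show ?thesis .
qed

lemma V_sum:
  assumes q: "prime q" and "a + b + m \<le> c"
  shows "V q a + V q b + V q m \<le> V q c"
proof -
  have "multiplicity q (fact a * fact b * fact m :: nat) \<le> multiplicity q (fact c :: nat)"
    by (rule dvd_imp_multiplicity_le[OF fact3_dvd[OF assms(2)]]) simp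
  moreover have "multiplicity q (fact a * fact b * fact m :: nat) = V q a + V q b + V q m"
    unfolding V_def using q by (simp add: prime_elem_multiplicity_mult_distrib)
  ultimately show ?thesis by (simp add: V_def)
qed

lemma reduction:
  assumes H: "\<And>q. prime q \<Longrightarrow> q \<le> a \<Longrightarrow> S q a \<le> 1 + V q (a div 4)"
    and ab: "a \<le> b"
  shows "totient (fact a) * totient (fact b) dvd totient (fact (a + b + (a + b) div 8))"
proof (rule multiplicity_le_imp_dvd)
  show "totient (fact a) * totient (fact b) \<noteq> 0" by simp
next
  fix q :: nat assume q: "prime q"
  define c where "c = a + b + (a + b) div 8"
  define m where "m = a div 4"
  have mc: "a + b + m \<le> c" unfolding c_def m_def using ab by linarith
  have Vs: "V q a + V q b + V q m \<le> V q c" by (rule V_sum[OF q mc])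
  have Sm: "S q b \<le> S q c" using mc by (intro S_mono) simp
  have L: "multiplicity q (totient (fact a) * totient (fact b)) = (V q a - 1 + S q a) + (V q b - 1 + S q b)"
    using q by (simp add: prime_elem_multiplicity_mult_distrib mult_totient_fact)
  have R: "multiplicity q (totient (fact c)) = V q c - 1 + S q c"
    using q by (simp add: mult_totient_fact)
  show "multiplicity q (totient (fact a) * totient (fact b)) \<le> multiplicity q (totient (fact (a + b + (a + b) div 8)))"
    unfolding c_def[symmetric] L R
  proof (cases "q \<le> a")
    case True
    have "V q a \<ge> 1" "V q b \<ge> 1" using V_pos[OF q] True ab by auto
    moreover have "S q a \<le> 1 + V q m" unfolding m_def using H[OF q True] .
    ultimately show "V q a - 1 + S q a + (V q b - 1 + S q b) \<le> V q c - 1 + S q c"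
      using Vs Sm by linarith
  next
    case False
    then have "S q a = 0" "V q a = 0" using S_zero[OF q] V_zero[OF q] by auto
    then show "V q a - 1 + S q a + (V q b - 1 + S q b) \<le> V q c - 1 + S q c"
      using Vs Sm by linarith
  qed
qed




definition Qs :: "nat \<Rightarrow> nat set" where "Qs n = {p. prime p \<and> n < p \<and> p \<le> 2 * n}"

lemma finite_Qs[simp]: "finite (Qs n)"
  unfolding Qs_def by (rule finite_subset[of _ "{..2*n}"]) auto

lemma Qs_dvd_binom:
  assumes r: "prime r" and rQ: "r \<in> Qs n"
  shows "r dvd (2 * n choose n)"
proof -
  have e: "(fact (2*n) :: nat) = fact n * fact n * (2 * n choose n)"
    using binomial_fact_lemma[of n "2*n"] by (simp add: mult_2)
  have "r dvd (fact (2*n) :: nat)" using r rQ by (simp add: prime_dvd_fact_iff Qs_def)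
  then have "r dvd fact n * fact n * (2 * n choose n)" using e by simp
  moreover have "\<not> r dvd (fact n :: nat)" using r rQ by (simp add: prime_dvd_fact_iff Qs_def)
  ultimately show ?thesis using r by (simp add: prime_dvd_mult_iff)
qed

lemma prod_Qs_dvd: "\<Prod>(Qs n) dvd (2 * n choose n)"
proof (rule multiplicity_le_imp_dvd)
  show "\<Prod>(Qs n) \<noteq> 0" by (auto simp: Qs_def prime_gt_0_nat)
next
  fix r :: nat assume r: "prime r"
  have "multiplicity r (\<Prod>(Qs n)) = (\<Sum>p\<in>Qs n. multiplicity r p)"
    using r by (intro prime_elem_multiplicity_prod_distrib) (auto simp: Qs_def)
  also have "\<dots> = (\<Sum>p\<in>Qs n. if p = r then 1 else 0)"
  proof (rule sum.cong[OF refl])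
    fix p assume "p \<in> Qs n"
    then have p: "prime p" by (simp add: Qs_def)
    show "multiplicity r p = (if p = r then 1 else 0)"
    proof (cases "p = r")
      case True then show ?thesis using r by simp
    next
      case False
      then have "\<not> r dvd p" using p r primes_dvd_imp_eq by blast
      then show ?thesis using False by (simp add: not_dvd_imp_multiplicity_0)
    qed
  qed
  also have "\<dots> = (if r \<in> Qs n then 1 else 0)" by (simp add: sum.delta')
  also have "\<dots> \<le> multiplicity r (2 * n choose n)"
  proof (cases "r \<in> Qs n")
    case True
    then have "r ^ 1 dvd (2 * n choose n)" using Qs_dvd_binom[OF r] by simp
    moreover have "(2 * n choose n) > 0" by simp
    ultimately show ?thesis using True pdvd_iff[OF r, of "2 * n choose n" 1] by simp
  qed simp
  finally show "multiplicity r (\<Prod>(Qs n)) \<le> multiplicity r (2 * n choose n)" .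
qed

lemma card_Qs_bound: "n ^ card (Qs n) \<le> 4 ^ n"
proof -
  have "n ^ card (Qs n) = (\<Prod>p\<in>Qs n. n)" by simp
  also have "\<dots> \<le> \<Prod>(Qs n)" by (rule prod_mono) (auto simp: Qs_def)
  also have "\<dots> \<le> (2 * n choose n)" by (rule dvd_imp_le[OF prod_Qs_dvd]) simp
  also have "\<dots> \<le> 2 ^ (2 * n)" by (rule binomial_le_pow2)
  also have "\<dots> = 4 ^ n" by (simp add: power_mult)
  finally show ?thesis .
qed

lemma card_Qs_pow2: "K * card (Qs (2 ^ K)) \<le> 2 ^ (K + 1)"
proof -
  have "(2::nat) ^ (K * card (Qs (2 ^ K))) = (2 ^ K) ^ card (Qs (2 ^ K))" by (simp add: power_mult)
  also have "\<dots> \<le> 4 ^ (2 ^ K)" by (rule card_Qs_bound)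
  also have "\<dots> = (2 ^ 2) ^ (2 ^ K)" by simp
  also have "\<dots> = 2 ^ (2 * 2 ^ K)" by (rule power_mult[symmetric])
  also have "\<dots> = 2 ^ (2 ^ (K + 1))" by simp
  finally show ?thesis by simp
qed

definition pic :: "nat \<Rightarrow> nat" where "pic n = card (P n)"

lemma pic_le: "pic n \<le> n"
proof -
  have "P n \<subseteq> {1..n}" using prime_ge_1_nat by (auto simp: P_def)
  then show ?thesis unfolding pic_def by (metis card_atLeastAtMost card_mono diff_Suc_1 finite_atLeastAtMost)
qed

lemma pic_mono: "m \<le> n \<Longrightarrow> pic m \<le> pic n"
  unfolding pic_def by (rule card_mono) (auto simp: P_def)

lemma pic_double: "pic (2 * n) = pic n + card (Qs n)"
proof -
  have "P (2 * n) = P n \<union> Qs n" by (auto simp: P_def Qs_def)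
  moreover have "P n \<inter> Qs n = {}" by (auto simp: P_def Qs_def)
  ultimately show ?thesis unfolding pic_def by (simp add: card_Un_disjoint)
qed

lemma cheb_pow2: "K \<ge> 800 \<Longrightarrow> 400 * pic (2 ^ K) \<le> 2 ^ K + 400 * 2 ^ 800"
proof (induction K rule: dec_induct)
  case base
  then show ?case using pic_le[of "2^800"] by simp
next
  case (step K)
  have "K * card (Qs (2 ^ K)) \<le> 2 ^ (K + 1)" by (rule card_Qs_pow2)
  then have "800 * card (Qs (2 ^ K)) \<le> 2 ^ (K + 1)"
    using step(1) by (meson dual_order.trans mult_le_mono1)
  then have "400 * card (Qs (2 ^ K)) \<le> 2 ^ K" by simp
  moreover have "pic (2 ^ Suc K) = pic (2 ^ K) + card (Qs (2 ^ K))"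
    using pic_double[of "2 ^ K"] by simp
  ultimately show ?case using step(3) by simp
qed

lemma cheb: "200 * pic a \<le> a + 200 * 2 ^ 800"
proof (cases "a < 2 ^ 800")
  case True
  then show ?thesis using pic_le[of a] by linarith
next
  case False
  have "(1::nat) \<le> 2 ^ 800" by simp
  then have "a \<ge> 1" using False by linarith
  then obtain K where K: "2 ^ K \<le> a" "a < 2 ^ (K + 1)" using ex_power_ivl1[of 2 a] by auto
  have "K + 1 \<ge> 800"
  proof (rule ccontr)
    assume "\<not> K + 1 \<ge> 800"
    then have "(2::nat) ^ (K + 1) \<le> 2 ^ 800" by (intro power_increasing) auto
    then show False using K False by linarith
  qed
  then have "400 * pic (2 ^ (K + 1)) \<le> 2 ^ (K + 1) + 400 * 2 ^ 800" by (rule cheb_pow2)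
  moreover have "pic a \<le> pic (2 ^ (K + 1))" using K by (intro pic_mono) simp
  moreover have "(2::nat) ^ (K + 1) \<le> 2 * a" using K by simp
  ultimately show ?thesis by linarith
qed




lemma sum_shift1: "(\<Sum>i\<in>{1..Suc K}. f i) = f 1 + (\<Sum>i\<in>{1..K}. f (Suc i :: nat))"
proof -
  have "(\<Sum>i\<in>{1..Suc K}. f i) = f 1 + (\<Sum>i\<in>{Suc 1..Suc K}. f i)"
    by (rule sum.atLeast_Suc_atMost) simp
  also have "(\<Sum>i\<in>{Suc 1..Suc K}. f i) = (\<Sum>i\<in>{1..K}. f (Suc i))"
    by (subst sum.atLeast_Suc_atMost_Suc_shift) (simp add: comp_def)
  finally show ?thesis .
qed

lemma div_pow_Suc: "(y::nat) div q ^ Suc i = (y div q) div q ^ i"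
  by (simp add: div_mult2_eq power_Suc)

lemma geo_ub:
  assumes q: "(q::nat) \<ge> 2"
  shows "(q - 1) * (\<Sum>i\<in>{1..K}. y div q ^ i) \<le> y"
proof (induction K arbitrary: y)
  case 0 then show ?case by simp
next
  case (Suc K)
  have "(\<Sum>i\<in>{1..Suc K}. y div q ^ i) = y div q + (\<Sum>i\<in>{1..K}. (y div q) div q ^ i)"
    by (simp only: sum_shift1 div_pow_Suc power_one_right)
  then have "(q - 1) * (\<Sum>i\<in>{1..Suc K}. y div q ^ i) = (q - 1) * (y div q) + (q - 1) * (\<Sum>i\<in>{1..K}. (y div q) div q ^ i)"
    by (simp add: algebra_simps)
  also have "\<dots> \<le> (q - 1) * (y div q) + y div q" using Suc.IH[of "y div q"] by simp
  also have "\<dots> = q * (y div q)" using q by (simp add: algebra_simps)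
  also have "\<dots> \<le> y" by simp
  finally show ?case .
qed

lemma geo_lb:
  assumes q: "(q::nat) \<ge> 2"
  shows "m \<le> (q - 1) * (\<Sum>i\<in>{1..K}. m div q ^ i) + (q - 1) * K + m div q ^ K"
proof (induction K arbitrary: m)
  case 0 then show ?case by simp
next
  case (Suc K)
  have e: "(\<Sum>i\<in>{1..Suc K}. m div q ^ i) = m div q + (\<Sum>i\<in>{1..K}. (m div q) div q ^ i)"
    by (simp only: sum_shift1 div_pow_Suc power_one_right)
  have IH: "m div q \<le> (q - 1) * (\<Sum>i\<in>{1..K}. (m div q) div q ^ i) + (q - 1) * K + (m div q) div q ^ K"
    by (rule Suc.IH)
  have "m \<le> q * (m div q) + (q - 1)"
  proof -
    have "m = q * (m div q) + m mod q" by simp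
    moreover have "m mod q < q" using q by simp
    then have "m mod q \<le> q - 1" by linarith
    ultimately show ?thesis by linarith
  qed
  moreover have "q * (m div q) = (q - 1) * (m div q) + m div q" using q by (simp add: algebra_simps)
  moreover have "m div q ^ Suc K = (m div q) div q ^ K" by (rule div_pow_Suc)
  moreover have "(q - 1) * (\<Sum>i\<in>{1..Suc K}. m div q ^ i) = (q - 1) * (m div q) + (q - 1) * (\<Sum>i\<in>{1..K}. (m div q) div q ^ i)"
    unfolding e by (simp add: algebra_simps)
  moreover have "(q - 1) * Suc K = (q - 1) * K + (q - 1)" by simp
  ultimately show ?case using IH by linarith
qed

lemma A_le_pic: "A q a j \<le> pic a"
  unfolding A_def pic_def by (rule card_mono) auto

lemma A_le_div:
  assumes d: "q ^ j > 0"
  shows "A q a j \<le> (a - 1) div q ^ j"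
proof -
  let ?d = "q ^ j"
  have "card {p\<in>P a. ?d dvd p - 1} \<le> card {t\<in>{1..a - 1}. ?d dvd t}"
  proof (rule card_inj_on_le)
    show "inj_on (\<lambda>p. p - 1) {p\<in>P a. ?d dvd p - 1}"
      by (rule inj_onI) (auto simp: P_def dest!: prime_gt_1_nat)
    show "(\<lambda>p. p - 1) ` {p\<in>P a. ?d dvd p - 1} \<subseteq> {t\<in>{1..a - 1}. ?d dvd t}"
    proof
      fix t assume "t \<in> (\<lambda>p. p - 1) ` {p\<in>P a. ?d dvd p - 1}"
      then obtain p where p: "p \<in> P a" "?d dvd p - 1" "t = p - 1" by blast
      then have "p > 1" "p \<le> a" using prime_gt_1_nat by (auto simp: P_def)
      then show "t \<in> {t\<in>{1..a - 1}. ?d dvd t}" using p by auto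
    qed
  qed auto
  also have "\<dots> = (a - 1) div ?d" by (rule card_multiples[OF d])
  finally show ?thesis unfolding A_def .
qed

lemma small_q:
  assumes q: "prime q" and q7: "q \<le> 7" and aN: "a \<ge> 100 * (200 * 2 ^ 800) + 10000"
  shows "S q a \<le> 1 + V q (a div 4)"
proof -
  define C0 :: nat where "C0 = 200 * 2 ^ 800"
  have h1: "200 * pic a \<le> a + C0" unfolding C0_def by (rule cheb)
  have aC: "a \<ge> 100 * C0 + 10000" using aN unfolding C0_def .
  have q2: "q \<ge> 2" using prime_ge_2_nat[OF q] .
  have a4: "a \<ge> 4" using aC by linarith
  define m where "m = a div 4"
  define y where "y = (a - 1) div q ^ 4"
  define z where "z = m div q ^ 20"
  define L where "L = (\<Sum>i\<in>{1..20}. m div q ^ i)"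
  have qpos: "\<And>j. q ^ j > 0" using q2 by simp
  have split: "{1..a} = {1..4} \<union> {5..a}" using a4 by auto
  have Ssplit: "S q a = (\<Sum>j\<in>{1..4}. A q a j) + (\<Sum>j\<in>{5..a}. A q a j)"
    unfolding S_levels[OF q] split by (rule sum.union_disjoint) auto
  have s1: "(\<Sum>j\<in>{1..4}. A q a j) \<le> 4 * pic a"
  proof -
    have "(\<Sum>j\<in>{1..4}. A q a j) \<le> (\<Sum>j\<in>{1..4::nat}. pic a)" by (rule sum_mono) (rule A_le_pic)
    then show ?thesis by simp
  qed
  have s2: "(\<Sum>j\<in>{5..a}. A q a j) \<le> (\<Sum>i\<in>{1..a-4}. y div q ^ i)"
  proof -
    have ivl: "{5..a} = {1 + 4..(a - 4) + 4}" using a4 by simp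
    have "(\<Sum>j\<in>{5..a}. A q a j) \<le> (\<Sum>j\<in>{5..a}. (a - 1) div q ^ j)"
      by (rule sum_mono) (rule A_le_div[OF qpos])
    also have "\<dots> = (\<Sum>j\<in>{1 + 4..(a - 4) + 4}. (a - 1) div q ^ j)" by (simp only: ivl)
    also have "(\<Sum>j\<in>{1 + 4..(a - 4) + 4}. (a - 1) div q ^ j) = (\<Sum>i\<in>{1..a - 4}. (a - 1) div q ^ (i + 4))"
      by (rule sum.shift_bounds_cl_nat_ivl)
    also have "\<dots> = (\<Sum>i\<in>{1..a - 4}. y div q ^ i)"
      unfolding y_def
    proof (rule sum.cong[OF refl])
      fix i
      have "(a - 1) div q ^ (i + 4) = (a - 1) div (q ^ 4 * q ^ i)" by (simp add: power_add mult.commute)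
      also have "\<dots> = (a - 1) div q ^ 4 div q ^ i" by (rule div_mult2_eq)
      finally show "(a - 1) div q ^ (i + 4) = (a - 1) div q ^ 4 div q ^ i" .
    qed
    finally show ?thesis .
  qed
  have g1: "(q - 1) * (\<Sum>i\<in>{1..a-4}. y div q ^ i) \<le> y" by (rule geo_ub[OF q2])
  have g2: "m \<le> (q - 1) * L + (q - 1) * 20 + z" unfolding L_def z_def by (rule geo_lb[OF q2])
  have VL: "L \<le> V q m" unfolding L_def by (rule leg_lb[OF q])
  have lhs: "(q - 1) * S q a \<le> 4 * (q - 1) * pic a + y"
  proof -
    have "(q - 1) * S q a = (q - 1) * (\<Sum>j\<in>{1..4}. A q a j) + (q - 1) * (\<Sum>j\<in>{5..a}. A q a j)"
      unfolding Ssplit by (simp add: algebra_simps)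
    also have "\<dots> \<le> (q - 1) * (4 * pic a) + (q - 1) * (\<Sum>i\<in>{1..a-4}. y div q ^ i)"
      using s1 s2 by (intro add_mono mult_le_mono2)
    also have "\<dots> \<le> 4 * (q - 1) * pic a + y" using g1 by simp
    finally show ?thesis .
  qed
  have e1: "4 * (q - 1) * pic a \<le> 24 * pic a" using q7 by (intro mult_le_mono1) linarith
  have e2: "(q - 1) * 20 \<le> 120" using q7 by linarith
  have e3: "16 * y \<le> a"
  proof -
    have "(16::nat) \<le> q ^ 4" using power_mono[OF q2, of 4] by simp
    then have "16 * y \<le> q ^ 4 * y" by (rule mult_le_mono1)
    also have "\<dots> \<le> a - 1" unfolding y_def by simp
    finally show ?thesis by simp
  qed
  have e4: "1048576 * z \<le> m"
  proof -
    have "(2::nat) ^ 20 \<le> q ^ 20" using power_mono[OF q2, of 20] by simp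
    then have "1048576 * z \<le> q ^ 20 * z" by (intro mult_le_mono1) simp
    also have "\<dots> \<le> m" unfolding z_def by simp
    finally show ?thesis .
  qed
  have e5: "a \<le> 4 * m + 3" unfolding m_def by linarith
  have e6: "q - 1 \<ge> 1" using q2 by linarith
  define r where "r = q - 1"
  have lhs': "r * S q a \<le> 4 * r * pic a + y" using lhs unfolding r_def .
  have g2': "m \<le> r * L + r * 20 + z" using g2 unfolding r_def .
  have e1': "4 * r * pic a \<le> 24 * pic a" using e1 unfolding r_def .
  have e2': "r * 20 \<le> 120" using e2 unfolding r_def .
  have e6': "r \<ge> 1" using e6 unfolding r_def .
  have k1: "4 * r * pic a + y + r * 20 + z \<le> r + m"
    using e1' e2' e3 e4 e5 h1 aC e6' by linarith
  have d: "r * (1 + L) = r + r * L" by (simp add: distrib_left)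
  have key: "r * S q a \<le> r * (1 + L)" using k1 lhs' g2' d by linarith
  then have "S q a \<le> 1 + L" using e6' mult_le_cancel1[of r "S q a" "1 + L"] by simp
  then show ?thesis using VL unfolding m_def by linarith
qed




definition cnd :: "nat \<Rightarrow> nat \<Rightarrow> nat \<Rightarrow> nat \<Rightarrow> nat \<Rightarrow> nat \<Rightarrow> bool" where
  "cnd d3 d5 d7 r3 r5 r7 = ((1 + 2 * r3 * d3) mod 3 \<noteq> 0 \<and> (1 + 2 * r5 * d5) mod 5 \<noteq> 0 \<and> (1 + 2 * r7 * d7) mod 7 \<noteq> 0)"

definition good :: "nat \<Rightarrow> nat \<Rightarrow> nat \<Rightarrow> nat \<Rightarrow> bool" where
  "good d3 d5 d7 u = cnd d3 d5 d7 (u mod 3) (u mod 5) (u mod 7)"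

definition Ncnt :: "nat \<Rightarrow> nat \<Rightarrow> nat \<Rightarrow> nat \<Rightarrow> nat" where
  "Ncnt d3 d5 d7 U = card {u\<in>{1..U}. good d3 d5 d7 u}"

definition nx :: "nat \<Rightarrow> nat \<Rightarrow> nat" where "nx p r = (if Suc r = p then 0 else Suc r)"
definition ck :: "nat \<Rightarrow> nat \<Rightarrow> bool" where "ck c u = (c \<le> Suc (u div 2) \<and> (60 \<le> u \<longrightarrow> Suc c \<le> u div 2))"

function go :: "nat \<Rightarrow> nat \<Rightarrow> nat \<Rightarrow> nat \<Rightarrow> nat \<Rightarrow> nat \<Rightarrow> nat \<Rightarrow> nat \<Rightarrow> nat \<Rightarrow> bool" where
"go d3 d5 d7 r3 r5 r7 c u k =
  (if k = 0 then c = 48 else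
   (ck (if cnd d3 d5 d7 r3 r5 r7 then Suc c else c) u \<and>
   go d3 d5 d7 (nx 3 r3) (nx 5 r5) (nx 7 r7) (if cnd d3 d5 d7 r3 r5 r7 then Suc c else c) (Suc u) (k - 1)))"
  by auto
termination by (relation "measure (\<lambda>(d3,d5,d7,r3,r5,r7,c,u,k). k)") auto

lemma go0: "go d3 d5 d7 r3 r5 r7 c u 0 = (c = 48)" by simp
lemma goS: "k \<noteq> 0 \<Longrightarrow> go d3 d5 d7 r3 r5 r7 c u k = (ck (if cnd d3 d5 d7 r3 r5 r7 then Suc c else c) u \<and>
   go d3 d5 d7 (nx 3 r3) (nx 5 r5) (nx 7 r7) (if cnd d3 d5 d7 r3 r5 r7 then Suc c else c) (Suc u) (k - 1))" by simp
declare go.simps[simp del]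

lemma cmp_1_1_1: "go 1 1 1 1 1 1 0 1 105"
  by (simp add: go0 goS nx_def ck_def cnd_def)

lemma cmp_1_1_2: "go 1 1 2 1 1 1 0 1 105"
  by (simp add: go0 goS nx_def ck_def cnd_def)

lemma cmp_1_1_3: "go 1 1 3 1 1 1 0 1 105"
  by (simp add: go0 goS nx_def ck_def cnd_def)

lemma cmp_1_1_4: "go 1 1 4 1 1 1 0 1 105"
  by (simp add: go0 goS nx_def ck_def cnd_def)

lemma cmp_1_1_5: "go 1 1 5 1 1 1 0 1 105"
  by (simp add: go0 goS nx_def ck_def cnd_def)

lemma cmp_1_1_6: "go 1 1 6 1 1 1 0 1 105"
  by (simp add: go0 goS nx_def ck_def cnd_def)

lemma cmp_1_2_1: "go 1 2 1 1 1 1 0 1 105"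
  by (simp add: go0 goS nx_def ck_def cnd_def)

lemma cmp_1_2_2: "go 1 2 2 1 1 1 0 1 105"
  by (simp add: go0 goS nx_def ck_def cnd_def)

lemma cmp_1_2_3: "go 1 2 3 1 1 1 0 1 105"
  by (simp add: go0 goS nx_def ck_def cnd_def)

lemma cmp_1_2_4: "go 1 2 4 1 1 1 0 1 105"
  by (simp add: go0 goS nx_def ck_def cnd_def)

lemma cmp_1_2_5: "go 1 2 5 1 1 1 0 1 105"
  by (simp add: go0 goS nx_def ck_def cnd_def)

lemma cmp_1_2_6: "go 1 2 6 1 1 1 0 1 105"
  by (simp add: go0 goS nx_def ck_def cnd_def)

lemma cmp_1_3_1: "go 1 3 1 1 1 1 0 1 105"
  by (simp add: go0 goS nx_def ck_def cnd_def)

lemma cmp_1_3_2: "go 1 3 2 1 1 1 0 1 105"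
  by (simp add: go0 goS nx_def ck_def cnd_def)

lemma cmp_1_3_3: "go 1 3 3 1 1 1 0 1 105"
  by (simp add: go0 goS nx_def ck_def cnd_def)

lemma cmp_1_3_4: "go 1 3 4 1 1 1 0 1 105"
  by (simp add: go0 goS nx_def ck_def cnd_def)

lemma cmp_1_3_5: "go 1 3 5 1 1 1 0 1 105"
  by (simp add: go0 goS nx_def ck_def cnd_def)

lemma cmp_1_3_6: "go 1 3 6 1 1 1 0 1 105"
  by (simp add: go0 goS nx_def ck_def cnd_def)

lemma cmp_1_4_1: "go 1 4 1 1 1 1 0 1 105"
  by (simp add: go0 goS nx_def ck_def cnd_def)

lemma cmp_1_4_2: "go 1 4 2 1 1 1 0 1 105"
  by (simp add: go0 goS nx_def ck_def cnd_def)

lemma cmp_1_4_3: "go 1 4 3 1 1 1 0 1 105"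
  by (simp add: go0 goS nx_def ck_def cnd_def)

lemma cmp_1_4_4: "go 1 4 4 1 1 1 0 1 105"
  by (simp add: go0 goS nx_def ck_def cnd_def)

lemma cmp_1_4_5: "go 1 4 5 1 1 1 0 1 105"
  by (simp add: go0 goS nx_def ck_def cnd_def)

lemma cmp_1_4_6: "go 1 4 6 1 1 1 0 1 105"
  by (simp add: go0 goS nx_def ck_def cnd_def)

lemma cmp_2_1_1: "go 2 1 1 1 1 1 0 1 105"
  by (simp add: go0 goS nx_def ck_def cnd_def)

lemma cmp_2_1_2: "go 2 1 2 1 1 1 0 1 105"
  by (simp add: go0 goS nx_def ck_def cnd_def)

lemma cmp_2_1_3: "go 2 1 3 1 1 1 0 1 105"
  by (simp add: go0 goS nx_def ck_def cnd_def)

lemma cmp_2_1_4: "go 2 1 4 1 1 1 0 1 105"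
  by (simp add: go0 goS nx_def ck_def cnd_def)

lemma cmp_2_1_5: "go 2 1 5 1 1 1 0 1 105"
  by (simp add: go0 goS nx_def ck_def cnd_def)

lemma cmp_2_1_6: "go 2 1 6 1 1 1 0 1 105"
  by (simp add: go0 goS nx_def ck_def cnd_def)

lemma cmp_2_2_1: "go 2 2 1 1 1 1 0 1 105"
  by (simp add: go0 goS nx_def ck_def cnd_def)

lemma cmp_2_2_2: "go 2 2 2 1 1 1 0 1 105"
  by (simp add: go0 goS nx_def ck_def cnd_def)

lemma cmp_2_2_3: "go 2 2 3 1 1 1 0 1 105"
  by (simp add: go0 goS nx_def ck_def cnd_def)

lemma cmp_2_2_4: "go 2 2 4 1 1 1 0 1 105"
  by (simp add: go0 goS nx_def ck_def cnd_def)

lemma cmp_2_2_5: "go 2 2 5 1 1 1 0 1 105"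
  by (simp add: go0 goS nx_def ck_def cnd_def)

lemma cmp_2_2_6: "go 2 2 6 1 1 1 0 1 105"
  by (simp add: go0 goS nx_def ck_def cnd_def)

lemma cmp_2_3_1: "go 2 3 1 1 1 1 0 1 105"
  by (simp add: go0 goS nx_def ck_def cnd_def)

lemma cmp_2_3_2: "go 2 3 2 1 1 1 0 1 105"
  by (simp add: go0 goS nx_def ck_def cnd_def)

lemma cmp_2_3_3: "go 2 3 3 1 1 1 0 1 105"
  by (simp add: go0 goS nx_def ck_def cnd_def)

lemma cmp_2_3_4: "go 2 3 4 1 1 1 0 1 105"
  by (simp add: go0 goS nx_def ck_def cnd_def)

lemma cmp_2_3_5: "go 2 3 5 1 1 1 0 1 105"
  by (simp add: go0 goS nx_def ck_def cnd_def)

lemma cmp_2_3_6: "go 2 3 6 1 1 1 0 1 105"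
  by (simp add: go0 goS nx_def ck_def cnd_def)

lemma cmp_2_4_1: "go 2 4 1 1 1 1 0 1 105"
  by (simp add: go0 goS nx_def ck_def cnd_def)

lemma cmp_2_4_2: "go 2 4 2 1 1 1 0 1 105"
  by (simp add: go0 goS nx_def ck_def cnd_def)

lemma cmp_2_4_3: "go 2 4 3 1 1 1 0 1 105"
  by (simp add: go0 goS nx_def ck_def cnd_def)

lemma cmp_2_4_4: "go 2 4 4 1 1 1 0 1 105"
  by (simp add: go0 goS nx_def ck_def cnd_def)

lemma cmp_2_4_5: "go 2 4 5 1 1 1 0 1 105"
  by (simp add: go0 goS nx_def ck_def cnd_def)

lemma cmp_2_4_6: "go 2 4 6 1 1 1 0 1 105"
  by (simp add: go0 goS nx_def ck_def cnd_def)

lemma comp_all: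
  assumes "d3 \<in> {1,2}" "d5 \<in> {1,2,3,4}" "d7 \<in> {1,2,3,4,5,6}"
  shows "go d3 d5 d7 1 1 1 0 1 105"
  using assms cmp_1_1_1 cmp_1_1_2 cmp_1_1_3 cmp_1_1_4 cmp_1_1_5 cmp_1_1_6 cmp_1_2_1 cmp_1_2_2 cmp_1_2_3 cmp_1_2_4 cmp_1_2_5 cmp_1_2_6 cmp_1_3_1 cmp_1_3_2 cmp_1_3_3 cmp_1_3_4 cmp_1_3_5 cmp_1_3_6 cmp_1_4_1 cmp_1_4_2 cmp_1_4_3 cmp_1_4_4 cmp_1_4_5 cmp_1_4_6 cmp_2_1_1 cmp_2_1_2 cmp_2_1_3 cmp_2_1_4 cmp_2_1_5 cmp_2_1_6 cmp_2_2_1 cmp_2_2_2 cmp_2_2_3 cmp_2_2_4 cmp_2_2_5 cmp_2_2_6 cmp_2_3_1 cmp_2_3_2 cmp_2_3_3 cmp_2_3_4 cmp_2_3_5 cmp_2_3_6 cmp_2_4_1 cmp_2_4_2 cmp_2_4_3 cmp_2_4_4 cmp_2_4_5 cmp_2_4_6 by auto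


lemma mod_lin: "(1 + 2 * (u mod r) * (d mod r)) mod r = (1 + 2 * u * d) mod (r::nat)"
proof -
  have "(2 * (u mod r) * (d mod r)) mod r = (2 * u * d) mod r"
    by (metis mod_mult_eq mod_mult_right_eq mult.assoc)
  then show ?thesis by (metis mod_add_right_eq)
qed

lemma nx_mod: "p > 0 \<Longrightarrow> nx p (u mod p) = Suc u mod p"
  unfolding nx_def by (simp add: mod_Suc)

lemma Ncnt_0: "Ncnt d3 d5 d7 0 = 0" unfolding Ncnt_def by simp

lemma Ncnt_Suc: "Ncnt d3 d5 d7 (Suc U) = Ncnt d3 d5 d7 U + (if good d3 d5 d7 (Suc U) then 1 else 0)"
proof -
  have e: "{u\<in>{1..Suc U}. good d3 d5 d7 u} = {u\<in>{1..U}. good d3 d5 d7 u} \<union> (if good d3 d5 d7 (Suc U) then {Suc U} else {})"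
    by (auto simp: le_Suc_eq)
  show ?thesis unfolding Ncnt_def e
    by (subst card_Un_disjoint) auto
qed

lemma go_correct:
  assumes "go d3 d5 d7 (u mod 3) (u mod 5) (u mod 7) (Ncnt d3 d5 d7 (u - 1)) u k" "u \<ge> 1"
  shows "(\<forall>v. u \<le> v \<and> v < u + k \<longrightarrow> ck (Ncnt d3 d5 d7 v) v) \<and> Ncnt d3 d5 d7 (u + k - 1) = 48"
  using assms
proof (induction k arbitrary: u)
  case 0
  then show ?case by (auto simp: go0)
next
  case (Suc k)
  have c': "(if cnd d3 d5 d7 (u mod 3) (u mod 5) (u mod 7) then Suc (Ncnt d3 d5 d7 (u - 1)) else Ncnt d3 d5 d7 (u - 1))
      = Ncnt d3 d5 d7 u"
  proof -
    have "u = Suc (u - 1)" using Suc.prems(2) by simp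
    then have "Ncnt d3 d5 d7 u = Ncnt d3 d5 d7 (u - 1) + (if good d3 d5 d7 u then 1 else 0)"
      by (metis Ncnt_Suc)
    then show ?thesis by (simp add: good_def)
  qed
  from Suc.prems(1) have st0: "ck (if cnd d3 d5 d7 (u mod 3) (u mod 5) (u mod 7) then Suc (Ncnt d3 d5 d7 (u - 1)) else Ncnt d3 d5 d7 (u - 1)) u \<and>
     go d3 d5 d7 (nx 3 (u mod 3)) (nx 5 (u mod 5)) (nx 7 (u mod 7)) (if cnd d3 d5 d7 (u mod 3) (u mod 5) (u mod 7) then Suc (Ncnt d3 d5 d7 (u - 1)) else Ncnt d3 d5 d7 (u - 1)) (Suc u) k"
    using goS[of "Suc k" d3 d5 d7 "u mod 3" "u mod 5" "u mod 7" "Ncnt d3 d5 d7 (u - 1)" u] by simp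
  have st: "ck (Ncnt d3 d5 d7 u) u \<and>
     go d3 d5 d7 (Suc u mod 3) (Suc u mod 5) (Suc u mod 7) (Ncnt d3 d5 d7 (Suc u - 1)) (Suc u) k"
  proof -
    have n3: "nx 3 (u mod 3) = Suc u mod 3" by (rule nx_mod) simp
    have n5: "nx 5 (u mod 5) = Suc u mod 5" by (rule nx_mod) simp
    have n7: "nx 7 (u mod 7) = Suc u mod 7" by (rule nx_mod) simp
    show ?thesis using st0 unfolding c' n3 n5 n7 by simp
  qed
  have IH: "(\<forall>v. Suc u \<le> v \<and> v < Suc u + k \<longrightarrow> ck (Ncnt d3 d5 d7 v) v) \<and> Ncnt d3 d5 d7 (Suc u + k - 1) = 48"
    using Suc.IH[of "Suc u"] st by simp
  show ?case
  proof (intro conjI allI impI)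
    fix v assume v: "u \<le> v \<and> v < u + Suc k"
    show "ck (Ncnt d3 d5 d7 v) v"
    proof (cases "v = u")
      case True then show ?thesis using st by simp
    next
      case False then show ?thesis using IH v by auto
    qed
  next
    show "Ncnt d3 d5 d7 (u + Suc k - 1) = 48" using IH by simp
  qed
qed

lemma comp_facts:
  assumes "d3 \<in> {1,2}" "d5 \<in> {1,2,3,4}" "d7 \<in> {1,2,3,4,5,6}"
  shows "(\<forall>v. 1 \<le> v \<and> v < 106 \<longrightarrow> ck (Ncnt d3 d5 d7 v) v) \<and> Ncnt d3 d5 d7 105 = 48"
  using go_correct[of d3 d5 d7 1 105] comp_all[OF assms] by (simp add: Ncnt_0)

lemma mod105: "(u + 105) mod 3 = (u::nat) mod 3" "(u + 105) mod 5 = (u::nat) mod 5" "(u + 105) mod 7 = (u::nat) mod 7"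
  by (subst mod_add_right_eq[symmetric], simp)+

lemma Ncnt_period: "Ncnt d3 d5 d7 (U + 105) = Ncnt d3 d5 d7 U + Ncnt d3 d5 d7 105"
proof -
  let ?g = "good d3 d5 d7"
  have e: "{u\<in>{1..U + 105}. ?g u} = {u\<in>{1..105}. ?g u} \<union> {u\<in>{106..U + 105}. ?g u}" by auto
  have e2: "{u\<in>{106..U + 105}. ?g u} = (\<lambda>u. u + 105) ` {u\<in>{1..U}. ?g u}"
  proof (rule Set.set_eqI)
    fix x
    show "x \<in> {u\<in>{106..U + 105}. ?g u} \<longleftrightarrow> x \<in> (\<lambda>u. u + 105) ` {u\<in>{1..U}. ?g u}"
    proof
      assume x: "x \<in> {u\<in>{106..U + 105}. ?g u}"
      have xr: "1 \<le> x - 105" "x - 105 \<le> U" using x by auto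
      have "x = (x - 105) + 105" using x by auto
      then have "?g x = ?g (x - 105)" using mod105[of "x - 105"] by (metis good_def)
      then have "x - 105 \<in> {u\<in>{1..U}. ?g u}" using x xr by auto
      moreover have "x = (x - 105) + 105" using x by auto
      ultimately show "x \<in> (\<lambda>u. u + 105) ` {u\<in>{1..U}. ?g u}" by blast
    next
      assume "x \<in> (\<lambda>u. u + 105) ` {u\<in>{1..U}. ?g u}"
      then obtain u where "u \<in> {u\<in>{1..U}. ?g u}" "x = u + 105" by blast
      then show "x \<in> {u\<in>{106..U + 105}. ?g u}" using mod105[of u] by (auto simp: good_def)
    qed
  qed
  have "card {u\<in>{1..U + 105}. ?g u} = card {u\<in>{1..105}. ?g u} + card {u\<in>{106..U + 105}. ?g u}"
    unfolding e by (rule card_Un_disjoint) auto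
  also have "card {u\<in>{106..U + 105}. ?g u} = card {u\<in>{1..U}. ?g u}"
    unfolding e2 by (rule card_image) (auto simp: inj_on_def)
  finally show ?thesis unfolding Ncnt_def by simp
qed

lemma Nbound:
  assumes "d3 \<in> {1,2}" "d5 \<in> {1,2,3,4}" "d7 \<in> {1,2,3,4,5,6}"
  shows "Ncnt d3 d5 d7 U \<le> Suc (U div 2) \<and> (60 \<le> U \<longrightarrow> Suc (Ncnt d3 d5 d7 U) \<le> U div 2)"
proof (induction U rule: less_induct)
  case (less U)
  note cf = comp_facts[OF assms]
  show ?case
  proof (cases "U = 0")
    case True then show ?thesis by (simp add: Ncnt_0)
  next
    case False
    show ?thesis
    proof (cases "U < 106")
      case True
      then have "ck (Ncnt d3 d5 d7 U) U" using cf False by auto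
      then show ?thesis by (simp add: ck_def)
    next
      case False
      define U' where "U' = U - 105"
      have U: "U = U' + 105" "U' < U" using False unfolding U'_def by auto
      have "Ncnt d3 d5 d7 U' \<le> Suc (U' div 2)" using less.IH[OF U(2)] by simp
      moreover have "Ncnt d3 d5 d7 U = Ncnt d3 d5 d7 U' + 48" using Ncnt_period[of d3 d5 d7 U'] cf U(1) by simp
      moreover have "U div 2 \<ge> U' div 2 + 52" using U(1) by linarith
      ultimately show ?thesis by linarith
    qed
  qed
qed

lemma not_dvd_pow:
  assumes q: "prime q" and r: "prime r" and ne: "r \<noteq> q"
  shows "\<not> r dvd q ^ j"
proof
  assume "r dvd q ^ j"
  then have "r dvd q" using r prime_dvd_power by blast
  then show False using q r ne primes_dvd_imp_eq by blast
qed

lemma A_sieve: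
  assumes q: "prime q" and q11: "q \<ge> 11" and j: "j \<ge> 1"
  shows "A q a j \<le> Ncnt (q ^ j mod 3) (q ^ j mod 5) (q ^ j mod 7) (((a - 1) div q ^ j) div 2)"
proof -
  define d where "d = q ^ j"
  define U where "U = ((a - 1) div d) div 2"
  let ?g = "good (d mod 3) (d mod 5) (d mod 7)"
  have "q \<le> d" unfolding d_def using j q prime_gt_0_nat[OF q]
    by (metis One_nat_def le_trans power_increasing power_one_right prime_ge_1_nat)
  then have d11: "d \<ge> 11" using q11 by linarith
  have oq: "odd q" using q q11 by (intro prime_odd_nat) auto
  have od: "odd d" unfolding d_def using oq by simp
  have "card {p\<in>P a. d dvd p - 1} \<le> card {u\<in>{1..U}. ?g u}"
  proof (rule card_inj_on_le)
    show "inj_on (\<lambda>p. (p - 1) div (2 * d)) {p\<in>P a. d dvd p - 1}"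
    proof (rule inj_onI)
      fix p p' assume p: "p \<in> {p\<in>P a. d dvd p - 1}" and p': "p' \<in> {p\<in>P a. d dvd p - 1}"
        and eq: "(p - 1) div (2 * d) = (p' - 1) div (2 * d)"
      have "\<And>x. x \<in> {p\<in>P a. d dvd p - 1} \<Longrightarrow> 2 * d dvd x - 1 \<and> x \<ge> 1"
      proof -
        fix x assume x: "x \<in> {p\<in>P a. d dvd p - 1}"
        then have xp: "prime x" "d dvd x - 1" by (auto simp: P_def)
        then have "x > 1" using prime_gt_1_nat by blast
        then have "x - 1 \<ge> d" using xp(2) d11 by (simp add: dvd_imp_le)
        then have "x > 2" using d11 by linarith
        then have "odd x" using xp(1) by (intro prime_odd_nat) auto
        then have "even (x - 1)" using \<open>x > 1\<close> by simp
        then have "2 dvd x - 1" by simp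
        moreover have "coprime 2 d" using od by simp
        ultimately have "2 * d dvd x - 1" using xp(2) by (simp add: divides_mult)
        then show "2 * d dvd x - 1 \<and> x \<ge> 1" using \<open>x > 1\<close> by simp
      qed
      from this[OF p] this[OF p'] eq show "p = p'"
        by (metis dvd_div_mult_self le_add_diff_inverse2)
    qed
  next
    show "(\<lambda>p. (p - 1) div (2 * d)) ` {p\<in>P a. d dvd p - 1} \<subseteq> {u\<in>{1..U}. ?g u}"
    proof
      fix u assume "u \<in> (\<lambda>p. (p - 1) div (2 * d)) ` {p\<in>P a. d dvd p - 1}"
      then obtain p where p: "p \<in> P a" "d dvd p - 1" "u = (p - 1) div (2 * d)" by blast
      then have pp: "prime p" "p \<le> a" by (auto simp: P_def)
      then have p1: "p > 1" using prime_gt_1_nat by blast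
      then have "p - 1 \<ge> d" using p(2) d11 by (simp add: dvd_imp_le)
      then have p12: "p \<ge> 12" using d11 by linarith
      then have "odd p" using pp(1) by (intro prime_odd_nat) auto
      then have "2 dvd p - 1" using p1 by simp
      moreover have "coprime 2 d" using od by simp
      ultimately have "2 * d dvd p - 1" using p(2) by (simp add: divides_mult)
      then have pe: "p - 1 = 2 * d * u" using p(3) by simp
      have u1: "u \<ge> 1" using pe p1 by (cases u) auto
      have "d * (2 * u) \<le> a - 1" using pe pp(2) by (simp add: mult_ac)
      then have "(d * (2 * u)) div d \<le> (a - 1) div d" by (rule div_le_mono)
      then have "2 * u \<le> (a - 1) div d" using d11 by simp
      then have uU: "u \<le> U" unfolding U_def by linarith
      have pv: "p = 1 + 2 * u * d" using pe p1 by (simp add: mult_ac)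
      have nd: "\<And>r. prime r \<Longrightarrow> r \<le> 7 \<Longrightarrow> \<not> r dvd p"
      proof
        fix r assume r: "prime r" "r \<le> 7" "r dvd p"
        then have "r = p" using pp(1) primes_dvd_imp_eq by blast
        then show False using r(2) p12 by linarith
      qed
      have "\<And>r. prime r \<Longrightarrow> r \<le> 7 \<Longrightarrow> (1 + 2 * (u mod r) * (d mod r)) mod r \<noteq> 0"
        using nd unfolding mod_lin pv[symmetric] by (simp add: dvd_eq_mod_eq_0)
      then have "?g u" unfolding good_def cnd_def by simp
      then show "u \<in> {u\<in>{1..U}. ?g u}" using u1 uU by simp
    qed
  qed auto
  then show ?thesis unfolding A_def Ncnt_def d_def U_def .
qed

lemma level_bound:
  assumes q: "prime q" and q11: "q \<ge> 11" and j: "j \<ge> 1"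
  shows "A q a j \<le> Suc (((a - 1) div q ^ j) div 4) \<and>
    (121 \<le> (a - 1) div q ^ j \<longrightarrow> Suc (A q a j) \<le> ((a - 1) div q ^ j) div 4)"
proof -
  define T where "T = (a - 1) div q ^ j"
  have ne: "\<And>r. prime r \<Longrightarrow> r \<le> 7 \<Longrightarrow> \<not> r dvd q ^ j"
    using q q11 by (intro not_dvd_pow) auto
  have m3: "q ^ j mod 3 \<in> {1,2}"
  proof -
    have "q ^ j mod 3 \<noteq> 0" using ne[of 3] by (simp add: dvd_eq_mod_eq_0)
    moreover have "q ^ j mod 3 < 3" by simp
    ultimately show ?thesis by auto
  qed
  have m5: "q ^ j mod 5 \<in> {1,2,3,4}"
  proof -
    have "q ^ j mod 5 \<noteq> 0" using ne[of 5] by (simp add: dvd_eq_mod_eq_0)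
    moreover have "q ^ j mod 5 < 5" by simp
    ultimately show ?thesis by auto
  qed
  have m7: "q ^ j mod 7 \<in> {1,2,3,4,5,6}"
  proof -
    have "q ^ j mod 7 \<noteq> 0" using ne[of 7] by (simp add: dvd_eq_mod_eq_0)
    moreover have "q ^ j mod 7 < 7" by simp
    ultimately show ?thesis by auto
  qed
  have A: "A q a j \<le> Ncnt (q ^ j mod 3) (q ^ j mod 5) (q ^ j mod 7) (T div 2)"
    unfolding T_def by (rule A_sieve[OF q q11 j])
  have B: "Ncnt (q ^ j mod 3) (q ^ j mod 5) (q ^ j mod 7) (T div 2) \<le> Suc (T div 2 div 2) \<and>
     (60 \<le> T div 2 \<longrightarrow> Suc (Ncnt (q ^ j mod 3) (q ^ j mod 5) (q ^ j mod 7) (T div 2)) \<le> T div 2 div 2)"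
    by (rule Nbound[OF m3 m5 m7])
  have "T div 2 div 2 = T div 4" by (simp add: div_mult2_eq)
  then show ?thesis using A B unfolding T_def[symmetric] by auto
qed




lemma large_q:
  assumes q: "prime q" and q11: "q \<ge> 11" and aN: "a \<ge> 15000"
  shows "S q a \<le> 1 + V q (a div 4)"
proof -
  define T where "T j = (a - 1) div q ^ j" for j
  define f where "f j = A q a j" for j
  define h where "h j = T j div 4" for j
  have q0: "q > 0" using q11 by simp
  have fb: "\<And>j. j \<ge> 1 \<Longrightarrow> f j \<le> Suc (h j) \<and> (121 \<le> T j \<longrightarrow> Suc (f j) \<le> h j)"
    unfolding f_def h_def T_def using level_bound[OF q q11] by blast
  have f0: "\<And>j. T j = 0 \<Longrightarrow> f j = 0"
    unfolding f_def T_def using A_le_div q0 by (metis le_zero_eq zero_less_power)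
  have Tshift: "\<And>j i. T (j + i) = T j div q ^ i"
    unfolding T_def by (simp add: power_add div_mult2_eq)
  have Tmono: "\<And>i j. i \<le> j \<Longrightarrow> T j \<le> T i"
    using Tshift by (metis div_le_dividend le_add_diff_inverse)
  have hV: "(\<Sum>j\<in>{1..a}. h j) \<le> V q (a div 4)"
  proof -
    have "(\<Sum>j\<in>{1..a}. h j) \<le> (\<Sum>j\<in>{1..a}. (a div 4) div q ^ j)"
    proof (rule sum_mono)
      fix j
      have "h j = (a - 1) div (q ^ j * 4)" unfolding h_def T_def by (rule div_mult2_eq[symmetric])
      also have "\<dots> = (a - 1) div (4 * q ^ j)" by (simp only: mult.commute)
      also have "\<dots> = (a - 1) div 4 div q ^ j" by (rule div_mult2_eq)
      also have "\<dots> \<le> (a div 4) div q ^ j" by (intro div_le_mono) simp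
      finally show "h j \<le> (a div 4) div q ^ j" .
    qed
    also have "\<dots> \<le> V q (a div 4)" by (rule leg_lb[OF q])
    finally show ?thesis .
  qed
  have Sf: "S q a = (\<Sum>j\<in>{1..a}. f j)" unfolding f_def by (rule S_levels[OF q])
  have main: "(\<Sum>j\<in>{1..a}. f j) \<le> 1 + (\<Sum>j\<in>{1..a}. h j)"
  proof (cases "T 1 < 121")
    case True
    have q121: "q \<ge> 121"
    proof (rule ccontr)
      assume "\<not> q \<ge> 121"
      then have "q \<le> 120" by simp
      have "(a - 1) div q < 121" using True unfolding T_def by simp
      then have "a - 1 < 121 * q" using q0 by (simp add: div_less_iff_less_mult mult.commute)
      then show False using \<open>q \<le> 120\<close> aN by linarith
    qed
    have rest: "\<And>j. j \<in> {2..a} \<Longrightarrow> f j = 0"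
    proof -
      fix j assume j: "j \<in> {2..a}"
      have "T j \<le> T 2" using j by (intro Tmono) simp
      also have "T 2 = T 1 div q" using Tshift[of 1 1] by (simp add: numeral_2_eq_2)
      also have "\<dots> = 0" using True q121 by simp
      finally show "f j = 0" using f0 by simp
    qed
    have a1: "a \<ge> 1" using aN by simp
    have "(\<Sum>j\<in>{1..a}. f j) = f 1 + (\<Sum>j\<in>{2..a}. f j)"
      using a1 by (simp add: sum.atLeast_Suc_atMost numeral_2_eq_2)
    also have "(\<Sum>j\<in>{2..a}. f j) = 0" using rest by simp
    also have "f 1 \<le> 1 + h 1" using fb[of 1] by simp
    also have "h 1 \<le> (\<Sum>j\<in>{1..a}. h j)" using a1 by (intro member_le_sum) auto
    finally show ?thesis by simp
  next
    case False
    define u where "u = Max {j\<in>{1..a}. 121 \<le> T j}"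
    have a1: "a \<ge> 1" using aN by simp
    have fin: "finite {j\<in>{1..a}. 121 \<le> T j}" by simp
    have ne: "1 \<in> {j\<in>{1..a}. 121 \<le> T j}" using False a1 by simp
    have u_in: "u \<in> {j\<in>{1..a}. 121 \<le> T j}" unfolding u_def using fin ne by (intro Max_in) auto
    have u_max: "\<And>j. j \<in> {1..a} \<Longrightarrow> 121 \<le> T j \<Longrightarrow> j \<le> u" unfolding u_def using fin by (intro Max_ge) auto
    have pt: "\<And>j. j \<in> {1..a} \<Longrightarrow> f j + (if j = u then 1 else 0) \<le> h j + (if j = u + 1 then 1 else 0) + (if j = u + 2 then 1 else 0)"
    proof -
      fix j assume j: "j \<in> {1..a}"
      show "f j + (if j = u then 1 else 0) \<le> h j + (if j = u + 1 then 1 else 0) + (if j = u + 2 then 1 else 0)"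
      proof (cases "j \<le> u")
        case True
        then have "T j \<ge> 121" using Tmono[OF True] u_in by auto
        then have "Suc (f j) \<le> h j" using fb j by auto
        then show ?thesis by auto
      next
        case nle: False
        show ?thesis
        proof (cases "j \<le> u + 2")
          case True
          then show ?thesis using fb[of j] j nle by auto
        next
          case False
          have "u + 1 \<in> {1..a}" using j False by auto
          then have T1: "T (u + 1) < 121" using u_max[of "u + 1"] by fastforce
          have "T j = T (u + 1) div q ^ (j - (u + 1))" using Tshift[of "u + 1" "j - (u + 1)"] False by simp
          moreover have "q ^ (j - (u + 1)) \<ge> q ^ 2" using False q0 by (intro power_increasing) auto
          moreover have "q ^ 2 \<ge> 121" using q11 power_mono[of 11 q 2] by simp
          ultimately have "T j = 0" using T1 by (metis div_less le_trans not_less)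
          then show ?thesis using f0 False nle by simp
        qed
      qed
    qed
    have "(\<Sum>j\<in>{1..a}. f j + (if j = u then 1 else 0)) \<le> (\<Sum>j\<in>{1..a}. h j + (if j = u + 1 then 1 else 0) + (if j = u + 2 then 1 else 0))"
      by (rule sum_mono) (rule pt)
    moreover have "(\<Sum>j\<in>{1..a}. f j + (if j = u then 1 else 0)) = (\<Sum>j\<in>{1..a}. f j) + 1"
      using u_in by (simp add: sum.distrib)
    moreover have "(\<Sum>j\<in>{1..a}. h j + (if j = u + 1 then 1 else 0) + (if j = u + 2 then 1 else 0))
        \<le> (\<Sum>j\<in>{1..a}. h j) + 1 + 1"
    proof -
      have "(\<Sum>j\<in>{1..a}. (if j = u + 1 then 1 else 0)::nat) \<le> 1" by (simp add: sum.delta')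
      moreover have "(\<Sum>j\<in>{1..a}. (if j = u + 2 then 1 else 0)::nat) \<le> 1" by (simp add: sum.delta')
      ultimately show ?thesis by (simp add: sum.distrib)
    qed
    ultimately show ?thesis by linarith
  qed
  show ?thesis using Sf main hV by linarith
qed

lemma prime_gt7: assumes "prime (q::nat)" "q > 7" shows "q \<ge> 11"
proof (rule ccontr)
  assume "\<not> q \<ge> 11"
  then have "q = 8 \<or> q = 9 \<or> q = 10" using assms(2) by linarith
  moreover have "\<not> prime (8::nat)" using prime_odd_nat[of 8] by simp
  moreover have "\<not> prime (10::nat)" using prime_odd_nat[of 10] by simp
  moreover have "\<not> prime (9::nat)"
  proof
    assume "prime (9::nat)"
    moreover have "(3::nat) dvd 9" by simp
    ultimately show False using prime_nat_iff[of 9] by fastforce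
  qed
  ultimately show False using assms(1) by blast
qed

lemma star:
  assumes aN: "a \<ge> 100 * (200 * 2 ^ 800) + 10000" and q: "prime q" "q \<le> a"
  shows "S q a \<le> 1 + V q (a div 4)"
proof (cases "q \<le> 7")
  case True show ?thesis using small_q[OF q(1) True aN] by simp
next
  case False
  have "(15000::nat) \<le> 100 * (200 * 2 ^ 800) + 10000" by simp
  then have "a \<ge> 15000" using aN by linarith
  then show ?thesis using large_q[OF q(1) prime_gt7[OF q(1)]] False by simp
qed




lemma dvd_main:
  assumes aN: "a \<ge> 100 * (200 * 2 ^ 800) + 10000" and ab: "a \<le> b"
  shows "totient (fact a) * totient (fact b) dvd totient (fact (a + b + (a + b) div 8))"
  by (rule reduction[OF _ ab]) (rule star[OF aN])

theorem theorem1p3: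
  "\<exists>N::nat. \<forall>a b :: nat. 0 < a \<and> 0 < b \<and> N \<le> a \<and> N \<le> b \<longrightarrow>
     r_ab a b \<le> 9 / 8 \<and>
     totient (fact a) * totient (fact b) dvd totient (fact (a + b + (a + b) div 8))"
proof (intro exI allI impI)
  fix a b :: nat
  let ?N = "100 * (200 * 2 ^ 800) + 10000 :: nat"
  assume H: "0 < a \<and> 0 < b \<and> ?N \<le> a \<and> ?N \<le> b"
  have D: "totient (fact a) * totient (fact b) dvd totient (fact (a + b + (a + b) div 8))"
  proof (cases "a \<le> b")
    case True then show ?thesis using dvd_main H by blast
  next
    case False
    then have "totient (fact b) * totient (fact a) dvd totient (fact (b + a + (b + a) div 8))"
      using dvd_main H by simp
    then show ?thesis by (simp add: mult.commute add.commute)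
  qed
  define c where "c = a + b + (a + b) div 8"
  have cpos: "0 < c" unfolding c_def using H by simp
  have "c_ab a b \<le> c" unfolding c_ab_def
    by (rule Least_le) (use cpos D c_def in simp)
  moreover have "8 * c \<le> 9 * (a + b)"
  proof -
    obtain x where x: "x = (a + b) div 8" by blast
    have "8 * x \<le> a + b" unfolding x by simp
    then have "8 * (a + b + x) \<le> 9 * (a + b)" by simp
    then show ?thesis unfolding c_def x .
  qed
  ultimately have "8 * c_ab a b \<le> 9 * (a + b)" by linarith
  then have "real (8 * c_ab a b) \<le> real (9 * (a + b))" by (rule of_nat_mono)
  then have le: "8 * real (c_ab a b) \<le> 9 * real (a + b)" by simp
  have pos: "real (a + b) > 0" using H by simp
  have "r_ab a b \<le> 9 / 8" unfolding r_ab_def using le pos by (simp add: divide_le_eq)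
  then show "r_ab a b \<le> 9 / 8 \<and> totient (fact a) * totient (fact b) dvd totient (fact (a + b + (a + b) div 8))"
    using D by simp
qed


end
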